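(* Let $\alpha_1,\alpha_2\ge 0$ with $\alpha_1+\alpha_2=1$, $T>0$, $V\ge 0$. For problem (P1) below, the optimal UAV trajectory $x^*$ satisfies $x^*(t)\in[-D/2,D/2]$ for all $t\in[0,T]$, i.e. the UAV stays above the line segment between the two ground users. Problem (P1): maximize $r$ over $(r,r_1,r_2,x,p_1,p_2)$ subject to $r_k\ge\alpha_k r$ for $k=1,2$; $(r_1,r_2)\in\mathcal{C}(x,p)$; $p_1(t)+p_2(t)\le\bar P$ and $p_k(t)\ge 0$ for all $t\in[0,T]$; $|\dot x(t)|\le V$ for all $t\in[0,T]$.
   Context: Fix $D>0$, $H>0$, $\beta_0>0$, $\bar P>0$. Ground users GU 1, GU 2 are at horizontal positions $x_1=-D/2$, $x_2=D/2$; for UAV position $x\in\mathbb{R}$ (constant altitude $H$), $h_k(x)=\beta_0/((x-x_k)^2+H^2)$. A trajectory is a function $x:[0,T]\to\mathbb{R}$ ($V$-Lipschitz under the speed constraint), and a power allocation is a pair of measurable functions $p_1,p_2:[0,T]\to[0,\infty)$. $\mathcal{C}(x,p)$ is the set of $(r_1,r_2)$, $r_1,r_2\ge0$, with $r_1\le\frac1T\int_0^T\log_2(1+p_1(t)h_1(x(t)))dt$, $r_2\le\frac1T\int_0^T\log_2(1+p_2(t)h_2(x(t)))dt$, $r_1+r_2\le\frac1T\int_0^T\log_2(1+p_1(t)h_1(x(t))+p_2(t)h_2(x(t)))dt$. *)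

theory Defs
  imports "HOL-Analysis.Analysis"
begin

definition gu_pos :: "real \<Rightarrow> nat \<Rightarrow> real" where
  "gu_pos D k = (if k = 1 then - D / 2 else D / 2)"

definition chan_gain :: "real \<Rightarrow> real \<Rightarrow> real \<Rightarrow> nat \<Rightarrow> real \<Rightarrow> real" where
  "chan_gain D H \<beta>0 k x = \<beta>0 / ((x - gu_pos D k)\<^sup>2 + H\<^sup>2)"

definition cap_region ::
  "real \<Rightarrow> real \<Rightarrow> real \<Rightarrow> real \<Rightarrow> (real \<Rightarrow> real) \<Rightarrow> (real \<Rightarrow> real) \<Rightarrow> (real \<Rightarrow> real)
   \<Rightarrow> (real \<times> real) set" where
  "cap_region T D H \<beta>0 x p1 p2 =
     {(r1, r2). r1 \<ge> 0 \<and> r2 \<ge> 0 \<and>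
        r1 \<le> (1 / T) * (LINT t:{0..T}|lborel. log 2 (1 + p1 t * chan_gain D H \<beta>0 1 (x t))) \<and>
        r2 \<le> (1 / T) * (LINT t:{0..T}|lborel. log 2 (1 + p2 t * chan_gain D H \<beta>0 2 (x t))) \<and>
        r1 + r2 \<le> (1 / T) * (LINT t:{0..T}|lborel.
            log 2 (1 + p1 t * chan_gain D H \<beta>0 1 (x t) + p2 t * chan_gain D H \<beta>0 2 (x t)))}"

text \<open>Feasible points of problem (P1). The speed constraint |x'(t)| \<le> V is
  rendered as V-Lipschitz continuity of x on [0,T]; powers are Borel measurable.\<close>
definition P1_feasible ::
  "real \<Rightarrow> real \<Rightarrow> real \<Rightarrow> real \<Rightarrow> real \<Rightarrow> real \<Rightarrow> real \<Rightarrow> real \<Rightarrow>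
   real \<Rightarrow> real \<Rightarrow> real \<Rightarrow> (real \<Rightarrow> real) \<Rightarrow> (real \<Rightarrow> real) \<Rightarrow> (real \<Rightarrow> real) \<Rightarrow> bool" where
  "P1_feasible T V D H \<beta>0 Pbar \<alpha>1 \<alpha>2 r r1 r2 x p1 p2 \<longleftrightarrow>
     r1 \<ge> \<alpha>1 * r \<and> r2 \<ge> \<alpha>2 * r \<and>
     (r1, r2) \<in> cap_region T D H \<beta>0 x p1 p2 \<and>
     p1 \<in> borel_measurable lborel \<and> p2 \<in> borel_measurable lborel \<and>
     (\<forall>t\<in>{0..T}. p1 t + p2 t \<le> Pbar \<and> p1 t \<ge> 0 \<and> p2 t \<ge> 0) \<and>
     V-lipschitz_on {0..T} x"

definition P1_optimal ::
  "real \<Rightarrow> real \<Rightarrow> real \<Rightarrow> real \<Rightarrow> real \<Rightarrow> real \<Rightarrow> real \<Rightarrow> real \<Rightarrow>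
   real \<Rightarrow> real \<Rightarrow> real \<Rightarrow> (real \<Rightarrow> real) \<Rightarrow> (real \<Rightarrow> real) \<Rightarrow> (real \<Rightarrow> real) \<Rightarrow> bool" where
  "P1_optimal T V D H \<beta>0 Pbar \<alpha>1 \<alpha>2 r r1 r2 x p1 p2 \<longleftrightarrow>
     P1_feasible T V D H \<beta>0 Pbar \<alpha>1 \<alpha>2 r r1 r2 x p1 p2 \<and>
     (\<forall>r' r1' r2' x' p1' p2'. P1_feasible T V D H \<beta>0 Pbar \<alpha>1 \<alpha>2 r' r1' r2' x' p1' p2' \<longrightarrow> r' \<le> r)"

end

theory Submission imports Defs begin

definition clampD :: "real \<Rightarrow> real \<Rightarrow> real" where
  "clampD D y = max (- D / 2) (min (D / 2) y)"

lemma gu_pos_cases: "gu_pos D k = - D/2 \<or> gu_pos D k = D/2"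
  by (simp add: gu_pos_def)

lemma sq_key:
  assumes "D > 0"
  shows "(y - gu_pos D k)\<^sup>2 \<ge> (clampD D y - gu_pos D k)\<^sup>2 + (y - clampD D y)\<^sup>2"
proof -
  let ?z = "gu_pos D k" and ?u = "clampD D y"
  have "(y - ?u) * (?u - ?z) \<ge> 0"
    using gu_pos_cases[of D k] assms unfolding clampD_def
    by (cases "y \<le> - D/2"; cases "y \<le> D/2") (auto simp: max_def min_def mult_nonneg_nonneg mult_nonpos_nonpos)
  moreover have "(y - ?z)\<^sup>2 = (y - ?u)\<^sup>2 + 2 * ((y - ?u) * (?u - ?z)) + (?u - ?z)\<^sup>2"
    by (simp add: power2_eq_square algebra_simps)
  ultimately show ?thesis by linarith
qed

lemma gain_pos: "H > 0 \<Longrightarrow> \<beta>0 > 0 \<Longrightarrow> chan_gain D H \<beta>0 k y > 0"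
  unfolding chan_gain_def by (simp add: add_nonneg_pos)

lemma gain_le: "H > 0 \<Longrightarrow> \<beta>0 > 0 \<Longrightarrow> chan_gain D H \<beta>0 k y \<le> \<beta>0 / H\<^sup>2"
  unfolding chan_gain_def
  by (rule divide_left_mono) (auto intro!: mult_pos_pos add_nonneg_pos)

lemma gain_mono:
  assumes "D > 0" "H > 0" "\<beta>0 > 0"
  shows "chan_gain D H \<beta>0 k y \<le> chan_gain D H \<beta>0 k (clampD D y)"
proof -
  have a: "(clampD D y - gu_pos D k)\<^sup>2 + H\<^sup>2 \<le> (y - gu_pos D k)\<^sup>2 + H\<^sup>2"
    using sq_key[OF assms(1), of y k] zero_le_power2[of "y - clampD D y"] by linarith
  have b: "0 < (clampD D y - gu_pos D k)\<^sup>2 + H\<^sup>2" using assms by (simp add: add_nonneg_pos)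
  show ?thesis unfolding chan_gain_def
    by (rule divide_left_mono[OF a]) (use assms b in \<open>auto intro!: mult_pos_pos add_nonneg_pos\<close>)
qed

lemma gain_strict:
  assumes "D > 0" "H > 0" "\<beta>0 > 0" "\<delta> \<le> \<bar>y - clampD D y\<bar>" "\<delta> \<ge> 0"
  shows "chan_gain D H \<beta>0 k y \<le> (D\<^sup>2 + H\<^sup>2) / (D\<^sup>2 + H\<^sup>2 + \<delta>\<^sup>2) * chan_gain D H \<beta>0 k (clampD D y)"
proof -
  define A where "A = (clampD D y - gu_pos D k)\<^sup>2 + H\<^sup>2"
  define A0 where "A0 = D\<^sup>2 + H\<^sup>2"
  have d2: "\<delta>\<^sup>2 \<le> (y - clampD D y)\<^sup>2"
    using assms(4,5) by (metis abs_le_square_iff abs_of_nonneg)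
  have Apos: "A > 0" unfolding A_def using assms by (simp add: add_nonneg_pos)
  have "\<bar>clampD D y - gu_pos D k\<bar> \<le> D"
    using gu_pos_cases[of D k] assms unfolding clampD_def by (auto simp: max_def min_def)
  then have "(clampD D y - gu_pos D k)\<^sup>2 \<le> D\<^sup>2"
    by (metis abs_le_square_iff abs_of_pos assms(1))
  then have AA0: "A \<le> A0" unfolding A_def A0_def by simp
  have "chan_gain D H \<beta>0 k y \<le> \<beta>0 / (A + \<delta>\<^sup>2)"
  proof -
    have a: "A + \<delta>\<^sup>2 \<le> (y - gu_pos D k)\<^sup>2 + H\<^sup>2"
      using sq_key[OF assms(1), of y k] d2 unfolding A_def by linarith
    have b: "0 < A + \<delta>\<^sup>2" using Apos by (simp add: add_pos_nonneg)
    show ?thesis unfolding chan_gain_def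
      by (rule divide_left_mono[OF a]) (use assms b in \<open>auto intro!: mult_pos_pos add_nonneg_pos\<close>)
  qed
  also have "\<dots> \<le> A0 / (A0 + \<delta>\<^sup>2) * (\<beta>0 / A)"
  proof -
    have "A * (A0 + \<delta>\<^sup>2) \<le> A0 * (A + \<delta>\<^sup>2)" using AA0
      by (simp add: algebra_simps mult_right_mono)
    moreover have "A0 > 0" unfolding A0_def using assms by (simp add: add_pos_pos)
    ultimately show ?thesis using Apos assms(3)
      by (simp add: field_simps add_pos_nonneg mult_left_mono)
  qed
  finally show ?thesis unfolding A0_def A_def chan_gain_def by simp
qed


lemma clamp_lip: "D > 0 \<Longrightarrow> \<bar>clampD D y - clampD D z\<bar> \<le> \<bar>y - z\<bar>"
  unfolding clampD_def by (auto simp: max_def min_def abs_if)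

lemma clamp_dist: "D > 0 \<Longrightarrow> \<bar>y - clampD D y\<bar> \<ge> \<bar>z - clampD D z\<bar> - \<bar>y - z\<bar>"
  unfolding clampD_def by (auto simp: max_def min_def abs_if)

lemma clamp_in: "D > 0 \<Longrightarrow> y \<notin> {- D/2 .. D/2} \<Longrightarrow> \<bar>y - clampD D y\<bar> > 0"
  unfolding clampD_def by (auto simp: max_def min_def abs_if)

lemma log_mono1: "0 \<le> b \<Longrightarrow> b \<le> a \<Longrightarrow> log 2 (1 + b) \<le> log 2 (1 + a)"
  by simp

lemma log_strict1: "0 \<le> b \<Longrightarrow> b < a \<Longrightarrow> log 2 (1 + b) < log 2 (1 + a)"
  by simp

lemma log_bnd: "0 \<le> a \<Longrightarrow> a \<le> M \<Longrightarrow> \<bar>log 2 (1 + a)\<bar> \<le> log 2 (1 + M)"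
  by simp

lemma meas_test:
  fixes X p :: "real \<Rightarrow> real"
  assumes [measurable]: "X \<in> borel_measurable borel" "p \<in> borel_measurable lborel"
  shows "(\<lambda>t. log 2 (1 + (if t \<in> {a..b} then c * p t + e else p t) * chan_gain D H \<beta>0 k (clampD D (X t)))) \<in> borel_measurable lborel"
  unfolding chan_gain_def clampD_def by measurable


lemma set_int_bounded:
  fixes f :: "real \<Rightarrow> real"
  assumes [measurable]: "f \<in> borel_measurable lborel"
    and "\<forall>t\<in>{0..T}. \<bar>f t\<bar> \<le> B"
  shows "set_integrable lborel {0..T} f"
  unfolding set_integrable_def
  apply (rule integrableI_bounded_set_indicator[where B=B])
  using assms(2) by (auto simp: emeasure_lborel_Icc_eq)

lemma strict_int:
  fixes f g :: "real \<Rightarrow> real"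
  assumes [measurable]: "f \<in> borel_measurable lborel" "g \<in> borel_measurable lborel"
    and bf: "\<forall>t\<in>{0..T}. \<bar>f t\<bar> \<le> B" and bg: "\<forall>t\<in>{0..T}. \<bar>g t\<bar> \<le> B"
    and le: "\<forall>t\<in>{0..T}. f t \<le> g t" and lt: "\<forall>t\<in>{a..b}. f t < g t"
    and ab: "0 \<le> a" "a < b" "b \<le> T"
  shows "(LINT t:{0..T}|lborel. f t) < (LINT t:{0..T}|lborel. g t)"
proof -
  have If: "set_integrable lborel {0..T} f" by (rule set_int_bounded[OF assms(1) bf])
  have Ig: "set_integrable lborel {0..T} g" by (rule set_int_bounded[OF assms(2) bg])
  have Ih: "set_integrable lborel {0..T} (\<lambda>t. g t - f t)" using set_integral_diff(1)[OF Ig If] .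
  have eq: "(LINT t:{0..T}|lborel. g t - f t) = (LINT t:{0..T}|lborel. g t) - (LINT t:{0..T}|lborel. f t)"
    using set_integral_diff(2)[OF Ig If] .
  define h where "h = (\<lambda>t. indicator {0..T} t *\<^sub>R (g t - f t))"
  have hi: "integrable lborel h" using Ih unfolding set_integrable_def h_def .
  have hn: "AE t in lborel. 0 \<le> h t" using le unfolding h_def by (auto simp: indicator_def)
  have "integral\<^sup>L lborel h \<ge> 0" using hn by (simp add: integral_nonneg_AE)
  moreover have "integral\<^sup>L lborel h \<noteq> 0"
  proof
    assume "integral\<^sup>L lborel h = 0"
    then have "AE t in lborel. h t = 0" using integral_nonneg_eq_0_iff_AE[OF hi hn] by simp
    then have "AE t in lborel. t \<notin> {a..b}"
      by eventually_elim (use lt ab in \<open>fastforce simp: h_def indicator_def\<close>)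
    then have "emeasure lborel {a..b} = 0"
      by (subst (asm) AE_iff_measurable[where N="{a..b}"]) auto
    then show False using ab by simp
  qed
  ultimately have "integral\<^sup>L lborel h > 0" by simp
  then show ?thesis using eq unfolding set_lebesgue_integral_def h_def by simp
qed

lemma pw_k:
  assumes D: "D > 0" and Hp: "H > 0" and bp: "\<beta>0 > 0" and p: "0 \<le> p" "p \<le> Pbar"
    and e: "0 < \<epsilon>" "\<epsilon> < 1" "1 - \<epsilon> = (D\<^sup>2 + H\<^sup>2) / (D\<^sup>2 + H\<^sup>2 + \<delta>\<^sup>2)"
    and dp: "\<delta> \<ge> 0" and Pp: "Pbar > 0"
  shows "p * chan_gain D H \<beta>0 k y \<le> p * chan_gain D H \<beta>0 k (clampD D y)"
    and "\<delta> \<le> \<bar>y - clampD D y\<bar> \<Longrightarrow> p * chan_gain D H \<beta>0 k y < ((1-\<epsilon>)*p + \<epsilon>*(Pbar/2)) * chan_gain D H \<beta>0 k (clampD D y)"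
    and "0 \<le> p * chan_gain D H \<beta>0 k y"
    and "p * chan_gain D H \<beta>0 k y \<le> Pbar * (\<beta>0 / H\<^sup>2)"
proof -
  show "p * chan_gain D H \<beta>0 k y \<le> p * chan_gain D H \<beta>0 k (clampD D y)"
    using gain_mono[OF D Hp bp] p by (simp add: mult_left_mono)
  show "0 \<le> p * chan_gain D H \<beta>0 k y" using gain_pos[OF Hp bp, of D k y] p by simp
  show "p * chan_gain D H \<beta>0 k y \<le> Pbar * (\<beta>0 / H\<^sup>2)"
    using gain_pos[OF Hp bp, of D k y] gain_le[OF Hp bp, of D k y] p
    by (meson mult_mono' order.strict_implies_order)
  assume d: "\<delta> \<le> \<bar>y - clampD D y\<bar>"
  let ?G = "chan_gain D H \<beta>0 k (clampD D y)"
  have "chan_gain D H \<beta>0 k y \<le> (1 - \<epsilon>) * ?G" using gain_strict[OF D Hp bp d dp] e(3) by simp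
  then have "p * chan_gain D H \<beta>0 k y \<le> p * ((1 - \<epsilon>) * ?G)" by (rule mult_left_mono) (use p in simp)
  then have "p * chan_gain D H \<beta>0 k y \<le> (1 - \<epsilon>) * p * ?G" by (simp add: ac_simps)
  moreover have "0 < \<epsilon> * (Pbar/2) * ?G" using e Pp gain_pos[OF Hp bp] by simp
  ultimately show "p * chan_gain D H \<beta>0 k y < ((1-\<epsilon>)*p + \<epsilon>*(Pbar/2)) * ?G"
    by (simp add: algebra_simps)
qed

theorem lemma2:
  fixes D H \<beta>0 Pbar \<alpha>1 \<alpha>2 T V r r1 r2 :: real
    and x p1 p2 :: "real \<Rightarrow> real"
  assumes "D > 0" "H > 0" "\<beta>0 > 0" "Pbar > 0"
    and "\<alpha>1 \<ge> 0" "\<alpha>2 \<ge> 0" "\<alpha>1 + \<alpha>2 = 1"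
    and "T > 0" "V \<ge> 0"
    and "P1_optimal T V D H \<beta>0 Pbar \<alpha>1 \<alpha>2 r r1 r2 x p1 p2"
  shows "\<forall>t\<in>{0..T}. x t \<in> {- D / 2 .. D / 2}"
proof (rule ccontr)
  assume "\<not> ?thesis"
  then obtain t0 where t0: "t0 \<in> {0..T}" "x t0 \<notin> {- D / 2 .. D / 2}" by blast
  note D = assms(1) and Hp = assms(2) and bp = assms(3) and Pp = assms(4) and Tp = assms(8)
  let ?g = "chan_gain D H \<beta>0"
  have feas: "P1_feasible T V D H \<beta>0 Pbar \<alpha>1 \<alpha>2 r r1 r2 x p1 p2"
    using assms(10) unfolding P1_optimal_def by blast
  have opt: "\<And>r' r1' r2' x' p1' p2'. P1_feasible T V D H \<beta>0 Pbar \<alpha>1 \<alpha>2 r' r1' r2' x' p1' p2' \<Longrightarrow> r' \<le> r"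
    using assms(10) unfolding P1_optimal_def by blast
  note F = feas[unfolded P1_feasible_def cap_region_def, simplified]
  have ra: "r1 \<ge> \<alpha>1 * r" "r2 \<ge> \<alpha>2 * r" using F by auto
  have p1m[measurable]: "p1 \<in> borel_measurable lborel" and p2m[measurable]: "p2 \<in> borel_measurable lborel"
    using F by auto
  have pw: "\<forall>t\<in>{0..T}. p1 t + p2 t \<le> Pbar \<and> p1 t \<ge> 0 \<and> p2 t \<ge> 0" using F by auto
  have lip: "V-lipschitz_on {0..T} x" using F by auto
  define X where "X = (\<lambda>t. x (max 0 (min T t)))"
  have Xeq: "\<And>t. t \<in> {0..T} \<Longrightarrow> X t = x t" unfolding X_def by auto
  have "continuous_on {0..T} x" by (rule lipschitz_on_continuous_on[OF lip])
  then have "continuous_on UNIV X" unfolding X_def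
    by (rule continuous_on_compose2[where f = "\<lambda>t. max 0 (min T t)"])
       (use Tp in \<open>auto intro!: continuous_intros\<close>)
  then have Xm[measurable]: "X \<in> borel_measurable borel" by (rule borel_measurable_continuous_onI)
  define I1 where "I1 = (LINT t:{0..T}|lborel. log 2 (1 + p1 t * ?g 1 (x t)))"
  define I2 where "I2 = (LINT t:{0..T}|lborel. log 2 (1 + p2 t * ?g 2 (x t)))"
  define I12 where "I12 = (LINT t:{0..T}|lborel. log 2 (1 + p1 t * ?g 1 (x t) + p2 t * ?g 2 (x t)))"
  have rI: "r1 \<ge> 0" "r2 \<ge> 0" "r1 \<le> (1/T) * I1" "r2 \<le> (1/T) * I2" "r1 + r2 \<le> (1/T) * I12"
    using F unfolding I1_def I2_def I12_def by auto
  define d0 where "d0 = \<bar>x t0 - clampD D (x t0)\<bar>"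
  have d0p: "d0 > 0" unfolding d0_def using clamp_in[OF D t0(2)] .
  define \<delta> where "\<delta> = d0 / 2"
  define \<eta> where "\<eta> = \<delta> / (V + 1)"
  have \<delta>p: "\<delta> > 0" and \<eta>p: "\<eta> > 0" unfolding \<eta>_def \<delta>_def using d0p assms(9) by auto
  have V\<eta>: "V * \<eta> \<le> \<delta>" unfolding \<eta>_def using \<delta>p assms(9) by (simp add: field_simps)
  define a where "a = max 0 (t0 - \<eta>)"
  define b where "b = min T (t0 + \<eta>)"
  have ab: "0 \<le> a" "a < b" "b \<le> T" unfolding a_def b_def using t0(1) \<eta>p Tp by auto
  have J: "\<And>t. t \<in> {a..b} \<Longrightarrow> t \<in> {0..T} \<and> \<delta> \<le> \<bar>x t - clampD D (x t)\<bar>"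
  proof -
    fix t assume t: "t \<in> {a..b}"
    then have tT: "t \<in> {0..T}" and tt: "\<bar>t - t0\<bar> \<le> \<eta>" unfolding a_def b_def by auto
    have "\<bar>x t - x t0\<bar> \<le> V * \<bar>t - t0\<bar>" using lipschitz_onD[OF lip tT t0(1)] by (simp add: dist_real_def)
    also have "\<dots> \<le> V * \<eta>" using tt assms(9) by (simp add: mult_left_mono)
    finally have "\<bar>x t - x t0\<bar> \<le> \<delta>" using V\<eta> by linarith
    then show "t \<in> {0..T} \<and> \<delta> \<le> \<bar>x t - clampD D (x t)\<bar>"
      using clamp_dist[OF D, where y="x t" and z="x t0"] tT unfolding d0_def \<delta>_def by (auto simp: d0_def)
  qed
  define A0 where "A0 = D\<^sup>2 + H\<^sup>2"
  have A0p: "A0 > 0" unfolding A0_def using D by (simp add: add_pos_nonneg)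
  define \<epsilon> where "\<epsilon> = \<delta>\<^sup>2 / (A0 + \<delta>\<^sup>2)"
  have \<epsilon>p: "\<epsilon> > 0" "\<epsilon> < 1" unfolding \<epsilon>_def using A0p \<delta>p
    by (auto simp: field_simps add_pos_pos)
  have ne: "A0 + \<delta>\<^sup>2 \<noteq> 0" using A0p by (metis add_pos_nonneg less_irrefl zero_le_power2)
  have \<epsilon>1: "1 - \<epsilon> = A0 / (A0 + \<delta>\<^sup>2)" unfolding \<epsilon>_def using ne
    by (simp add: field_simps)
  define q1 where "q1 = (\<lambda>t. if t \<in> {a..b} then (1 - \<epsilon>) * p1 t + \<epsilon> * (Pbar / 2) else p1 t)"
  define q2 where "q2 = (\<lambda>t. if t \<in> {a..b} then (1 - \<epsilon>) * p2 t + \<epsilon> * (Pbar / 2) else p2 t)"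
  have q1m[measurable]: "q1 \<in> borel_measurable lborel" unfolding q1_def by measurable
  have q2m[measurable]: "q2 \<in> borel_measurable lborel" unfolding q2_def by measurable
  define x' where "x' = (\<lambda>t. clampD D (x t))"
  define M where "M = Pbar * (\<beta>0 / H\<^sup>2)"
  have qb: "\<And>t. t \<in> {0..T} \<Longrightarrow> 0 \<le> q1 t \<and> 0 \<le> q2 t \<and> q1 t + q2 t \<le> Pbar \<and> q1 t \<le> Pbar \<and> q2 t \<le> Pbar"
  proof -
    fix t assume t: "t \<in> {0..T}"
    have h: "p1 t + p2 t \<le> Pbar" "0 \<le> p1 t" "0 \<le> p2 t" using pw t by auto
    have m0: "(1 - \<epsilon>) * (p1 t + p2 t) \<le> (1 - \<epsilon>) * Pbar" using h \<epsilon>p by (simp add: mult_left_mono)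
    have m1: "0 \<le> (1 - \<epsilon>) * p1 t" "0 \<le> (1 - \<epsilon>) * p2 t" using h \<epsilon>p by auto
    have m2: "(1 - \<epsilon>) * p1 t + (1 - \<epsilon>) * p2 t \<le> (1 - \<epsilon>) * Pbar" using m0 by (simp add: algebra_simps)
    have m3: "0 \<le> \<epsilon> * (Pbar / 2)" using \<epsilon>p Pp by simp
    have m4: "(1 - \<epsilon>) * Pbar + Pbar * \<epsilon> = Pbar" by (simp add: algebra_simps)
    show "0 \<le> q1 t \<and> 0 \<le> q2 t \<and> q1 t + q2 t \<le> Pbar \<and> q1 t \<le> Pbar \<and> q2 t \<le> Pbar"
      unfolding q1_def q2_def using h m1 m2 m3 m4 by (auto simp del: of_nat_add; simp only: mult.commute[of Pbar]; linarith)
  qed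
  have e3: "1 - \<epsilon> = (D\<^sup>2 + H\<^sup>2) / (D\<^sup>2 + H\<^sup>2 + \<delta>\<^sup>2)" using \<epsilon>1 unfolding A0_def .
  have pkb: "\<And>t. t \<in> {0..T} \<Longrightarrow> 0 \<le> p1 t \<and> p1 t \<le> Pbar \<and> 0 \<le> p2 t \<and> p2 t \<le> Pbar"
    using pw by force
  note pk1 = pw_k[OF D Hp bp _ _ \<epsilon>p e3 _ Pp]
  have \<delta>0: "\<delta> \<ge> 0" using \<delta>p by simp
  have P: "\<And>t (k::nat). t \<in> {0..T} \<Longrightarrow> (k = 1 \<or> k = 2) \<Longrightarrow>
     let p = (if k = 1 then p1 else p2); q = (if k = 1 then q1 else q2) in
     0 \<le> p t * ?g k (X t) \<and> p t * ?g k (X t) \<le> q t * ?g k (clampD D (X t)) \<and>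
     q t * ?g k (clampD D (X t)) \<le> M \<and>
     (t \<in> {a..b} \<longrightarrow> p t * ?g k (X t) < q t * ?g k (clampD D (X t)))"
  proof -
    fix t and k :: nat assume t: "t \<in> {0..T}" and k: "k = 1 \<or> k = 2"
    define p where "p = (if k = 1 then p1 else p2)"
    define q where "q = (if k = 1 then q1 else q2)"
    have pb: "0 \<le> p t" "p t \<le> Pbar" using pkb[OF t] unfolding p_def by auto
    have qb': "0 \<le> q t" "q t \<le> Pbar" using qb[OF t] unfolding q_def by auto
    have qdef: "q t = (if t \<in> {a..b} then (1 - \<epsilon>) * p t + \<epsilon> * (Pbar / 2) else p t)"
      unfolding q_def p_def q1_def q2_def by auto
    have 1: "0 \<le> p t * ?g k (X t)" using pk1(3)[OF pb \<delta>0] .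
    have 2: "p t * ?g k (X t) \<le> q t * ?g k (clampD D (X t))"
    proof (cases "t \<in> {a..b}")
      case True
      then have "\<delta> \<le> \<bar>X t - clampD D (X t)\<bar>" using J Xeq t by auto
      then show ?thesis using pk1(2)[OF pb \<delta>0] True qdef by (simp add: less_imp_le)
    next
      case False
      then have "q t = p t" using qdef by auto
      then show ?thesis using pk1(1)[OF pb \<delta>0] by simp
    qed
    have 3: "q t * ?g k (clampD D (X t)) \<le> M" using pk1(4)[OF qb' \<delta>0] unfolding M_def .
    have 4: "t \<in> {a..b} \<longrightarrow> p t * ?g k (X t) < q t * ?g k (clampD D (X t))"
    proof
      assume True: "t \<in> {a..b}"
      then have "\<delta> \<le> \<bar>X t - clampD D (X t)\<bar>" using J Xeq t by auto
      then show "p t * ?g k (X t) < q t * ?g k (clampD D (X t))" using pk1(2)[OF pb \<delta>0] True qdef by simp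
    qed
    show "?thesis t k" using 1 2 3 4 unfolding Let_def p_def q_def by simp
  qed
  have P1: "\<And>t. t \<in> {0..T} \<Longrightarrow> 0 \<le> p1 t * ?g 1 (X t) \<and> p1 t * ?g 1 (X t) \<le> q1 t * ?g 1 (clampD D (X t)) \<and>
     q1 t * ?g 1 (clampD D (X t)) \<le> M \<and> (t \<in> {a..b} \<longrightarrow> p1 t * ?g 1 (X t) < q1 t * ?g 1 (clampD D (X t)))"
    using P[of _ 1] by (simp add: Let_def)
  have P2: "\<And>t. t \<in> {0..T} \<Longrightarrow> 0 \<le> p2 t * ?g 2 (X t) \<and> p2 t * ?g 2 (X t) \<le> q2 t * ?g 2 (clampD D (X t)) \<and>
     q2 t * ?g 2 (clampD D (X t)) \<le> M \<and> (t \<in> {a..b} \<longrightarrow> p2 t * ?g 2 (X t) < q2 t * ?g 2 (clampD D (X t)))"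
    using P[of _ 2] by (simp add: Let_def)
  have M0: "0 \<le> M" unfolding M_def using Pp bp by simp
  define B where "B = log 2 (1 + 2 * M)"
  have bndM: "log 2 (1 + M) \<le> B" unfolding B_def using M0 by simp
  define J1 where "J1 = (LINT t:{0..T}|lborel. log 2 (1 + q1 t * ?g 1 (x' t)))"
  define J2 where "J2 = (LINT t:{0..T}|lborel. log 2 (1 + q2 t * ?g 2 (x' t)))"
  define J12 where "J12 = (LINT t:{0..T}|lborel. log 2 (1 + q1 t * ?g 1 (x' t) + q2 t * ?g 2 (x' t)))"
  have I1f: "I1 = (LINT t:{0..T}|lborel. log 2 (1 + p1 t * ?g 1 (X t)))"
    unfolding I1_def by (rule set_lebesgue_integral_cong) (auto simp: Xeq)
  have I2f: "I2 = (LINT t:{0..T}|lborel. log 2 (1 + p2 t * ?g 2 (X t)))"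
    unfolding I2_def by (rule set_lebesgue_integral_cong) (auto simp: Xeq)
  have I12f: "I12 = (LINT t:{0..T}|lborel. log 2 (1 + p1 t * ?g 1 (X t) + p2 t * ?g 2 (X t)))"
    unfolding I12_def by (rule set_lebesgue_integral_cong) (auto simp: Xeq)
  have J1f: "J1 = (LINT t:{0..T}|lborel. log 2 (1 + q1 t * ?g 1 (clampD D (X t))))"
    unfolding J1_def x'_def by (rule set_lebesgue_integral_cong) (auto simp: Xeq)
  have J2f: "J2 = (LINT t:{0..T}|lborel. log 2 (1 + q2 t * ?g 2 (clampD D (X t))))"
    unfolding J2_def x'_def by (rule set_lebesgue_integral_cong) (auto simp: Xeq)
  have J12f: "J12 = (LINT t:{0..T}|lborel. log 2 (1 + q1 t * ?g 1 (clampD D (X t)) + q2 t * ?g 2 (clampD D (X t))))"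
    unfolding J12_def x'_def by (rule set_lebesgue_integral_cong) (auto simp: Xeq)
  have IJ1: "I1 < J1" unfolding I1f J1f
  proof (rule strict_int[where B=B and a=a and b=b])
    show "(\<lambda>t. log 2 (1 + p1 t * ?g 1 (X t))) \<in> borel_measurable lborel"
      unfolding chan_gain_def by measurable
    show "(\<lambda>t. log 2 (1 + q1 t * ?g 1 (clampD D (X t)))) \<in> borel_measurable lborel"
      unfolding chan_gain_def clampD_def by measurable
    show "\<forall>t\<in>{0..T}. \<bar>log 2 (1 + p1 t * ?g 1 (X t))\<bar> \<le> B"
      using P1 log_bnd bndM by (meson order_trans)
    show "\<forall>t\<in>{0..T}. \<bar>log 2 (1 + q1 t * ?g 1 (clampD D (X t)))\<bar> \<le> B"
      using P1 log_bnd bndM by (meson order_trans)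
    show "\<forall>t\<in>{0..T}. log 2 (1 + p1 t * ?g 1 (X t)) \<le> log 2 (1 + q1 t * ?g 1 (clampD D (X t)))"
      using P1 log_mono1 by blast
    show "\<forall>t\<in>{a..b}. log 2 (1 + p1 t * ?g 1 (X t)) < log 2 (1 + q1 t * ?g 1 (clampD D (X t)))"
      using P1 log_strict1 J by blast
  qed (use ab in auto)
  have IJ2: "I2 < J2" unfolding I2f J2f
  proof (rule strict_int[where B=B and a=a and b=b])
    show "(\<lambda>t. log 2 (1 + p2 t * ?g 2 (X t))) \<in> borel_measurable lborel"
      unfolding chan_gain_def by measurable
    show "(\<lambda>t. log 2 (1 + q2 t * ?g 2 (clampD D (X t)))) \<in> borel_measurable lborel"
      unfolding chan_gain_def clampD_def by measurable
    show "\<forall>t\<in>{0..T}. \<bar>log 2 (1 + p2 t * ?g 2 (X t))\<bar> \<le> B"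
      using P2 log_bnd bndM by (meson order_trans)
    show "\<forall>t\<in>{0..T}. \<bar>log 2 (1 + q2 t * ?g 2 (clampD D (X t)))\<bar> \<le> B"
      using P2 log_bnd bndM by (meson order_trans)
    show "\<forall>t\<in>{0..T}. log 2 (1 + p2 t * ?g 2 (X t)) \<le> log 2 (1 + q2 t * ?g 2 (clampD D (X t)))"
      using P2 log_mono1 by blast
    show "\<forall>t\<in>{a..b}. log 2 (1 + p2 t * ?g 2 (X t)) < log 2 (1 + q2 t * ?g 2 (clampD D (X t)))"
      using P2 log_strict1 J by blast
  qed (use ab in auto)
  have IJ12: "I12 < J12" unfolding I12f J12f
  proof (rule strict_int[where B=B and a=a and b=b])
    show "(\<lambda>t. log 2 (1 + p1 t * ?g 1 (X t) + p2 t * ?g 2 (X t))) \<in> borel_measurable lborel"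
      unfolding chan_gain_def by measurable
    show "(\<lambda>t. log 2 (1 + q1 t * ?g 1 (clampD D (X t)) + q2 t * ?g 2 (clampD D (X t)))) \<in> borel_measurable lborel"
      unfolding chan_gain_def clampD_def by measurable
    show "\<forall>t\<in>{0..T}. \<bar>log 2 (1 + p1 t * ?g 1 (X t) + p2 t * ?g 2 (X t))\<bar> \<le> B"
    proof
      fix t assume t: "t \<in> {0..T}"
      have "\<bar>log 2 (1 + (p1 t * ?g 1 (X t) + p2 t * ?g 2 (X t)))\<bar> \<le> log 2 (1 + 2 * M)"
        by (rule log_bnd) (use P1[OF t] P2[OF t] in auto)
      then show "\<bar>log 2 (1 + p1 t * ?g 1 (X t) + p2 t * ?g 2 (X t))\<bar> \<le> B"
        unfolding B_def by (simp add: add.assoc)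
    qed
    show "\<forall>t\<in>{0..T}. \<bar>log 2 (1 + q1 t * ?g 1 (clampD D (X t)) + q2 t * ?g 2 (clampD D (X t)))\<bar> \<le> B"
    proof
      fix t assume t: "t \<in> {0..T}"
      have "\<bar>log 2 (1 + (q1 t * ?g 1 (clampD D (X t)) + q2 t * ?g 2 (clampD D (X t))))\<bar> \<le> log 2 (1 + 2 * M)"
        by (rule log_bnd) (use P1[OF t] P2[OF t] in auto)
      then show "\<bar>log 2 (1 + q1 t * ?g 1 (clampD D (X t)) + q2 t * ?g 2 (clampD D (X t)))\<bar> \<le> B"
        unfolding B_def by (simp add: add.assoc)
    qed
    show "\<forall>t\<in>{0..T}. log 2 (1 + p1 t * ?g 1 (X t) + p2 t * ?g 2 (X t)) \<le> log 2 (1 + q1 t * ?g 1 (clampD D (X t)) + q2 t * ?g 2 (clampD D (X t)))"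
    proof
      fix t assume t: "t \<in> {0..T}"
      have "log 2 (1 + (p1 t * ?g 1 (X t) + p2 t * ?g 2 (X t))) \<le> log 2 (1 + (q1 t * ?g 1 (clampD D (X t)) + q2 t * ?g 2 (clampD D (X t))))"
        by (rule log_mono1) (use P1[OF t] P2[OF t] in auto)
      then show "log 2 (1 + p1 t * ?g 1 (X t) + p2 t * ?g 2 (X t)) \<le> log 2 (1 + q1 t * ?g 1 (clampD D (X t)) + q2 t * ?g 2 (clampD D (X t)))"
        by (simp add: add.assoc)
    qed
    show "\<forall>t\<in>{a..b}. log 2 (1 + p1 t * ?g 1 (X t) + p2 t * ?g 2 (X t)) < log 2 (1 + q1 t * ?g 1 (clampD D (X t)) + q2 t * ?g 2 (clampD D (X t)))"
    proof
      fix t assume tab: "t \<in> {a..b}"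
      then have t: "t \<in> {0..T}" using J by blast
      have "log 2 (1 + (p1 t * ?g 1 (X t) + p2 t * ?g 2 (X t))) < log 2 (1 + (q1 t * ?g 1 (clampD D (X t)) + q2 t * ?g 2 (clampD D (X t))))"
        by (rule log_strict1) (use P1[OF t] P2[OF t] tab in auto)
      then show "log 2 (1 + p1 t * ?g 1 (X t) + p2 t * ?g 2 (X t)) < log 2 (1 + q1 t * ?g 1 (clampD D (X t)) + q2 t * ?g 2 (clampD D (X t)))"
        by (simp add: add.assoc)
    qed
  qed (use ab in auto)
  have Tinv: "1 / T > 0" using Tp by simp
  define R1 where "R1 = (1/T) * I1"
  define R2 where "R2 = (1/T) * I2"
  define R12 where "R12 = (1/T) * I12"
  define S1 where "S1 = (1/T) * J1"
  define S2 where "S2 = (1/T) * J2"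
  define S12 where "S12 = (1/T) * J12"
  have RS: "R1 < S1" "R2 < S2" "R12 < S12" unfolding R1_def S1_def R2_def S2_def R12_def S12_def
    using IJ1 IJ2 IJ12 Tp by (auto intro: divide_strict_right_mono)
  define d where "d = min (S1 - R1) (min (S2 - R2) ((S12 - R12) / 2))"
  have dp: "d > 0" unfolding d_def using RS by auto
  have lipx': "V-lipschitz_on {0..T} x'"
  proof (rule lipschitz_onI)
    fix s t assume "s \<in> {0..T}" "t \<in> {0..T}"
    then have "dist (x s) (x t) \<le> V * dist s t" by (rule lipschitz_onD[OF lip])
    moreover have "dist (x' s) (x' t) \<le> dist (x s) (x t)"
      unfolding x'_def dist_real_def by (rule clamp_lip[OF D])
    ultimately show "dist (x' s) (x' t) \<le> V * dist s t" by linarith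
  qed (use assms(9) in simp)
  have dl: "d \<le> S1 - R1" "d \<le> S2 - R2" "2 * d \<le> S12 - R12" unfolding d_def by (auto simp: min_def)
  have capm: "(r1 + d, r2 + d) \<in> cap_region T D H \<beta>0 x' q1 q2"
    unfolding cap_region_def J1_def[symmetric] J2_def[symmetric] J12_def[symmetric]
    using rI dp dl unfolding S1_def S2_def S12_def R1_def R2_def R12_def by auto
  have "P1_feasible T V D H \<beta>0 Pbar \<alpha>1 \<alpha>2 (r + d) (r1 + d) (r2 + d) x' q1 q2"
    unfolding P1_feasible_def
  proof (intro conjI)
    show "\<alpha>1 * (r + d) \<le> r1 + d" using ra dp assms(5,6,7) by (simp add: algebra_simps) (smt (verit) mult_left_le_one_le)
    show "\<alpha>2 * (r + d) \<le> r2 + d" using ra dp assms(5,6,7) by (simp add: algebra_simps) (smt (verit) mult_left_le_one_le)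
    show "(r1 + d, r2 + d) \<in> cap_region T D H \<beta>0 x' q1 q2" by (fact capm)
    show "q1 \<in> borel_measurable lborel" "q2 \<in> borel_measurable lborel" by (fact q1m q2m)+
    show "\<forall>t\<in>{0..T}. q1 t + q2 t \<le> Pbar \<and> 0 \<le> q1 t \<and> 0 \<le> q2 t" using qb by blast
    show "V-lipschitz_on {0..T} x'" by (fact lipx')
  qed
  then have "r + d \<le> r" by (rule opt)
  then show False using dp by simp
qed
end
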